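(* For each integer $n \ge 3$, define $D_{a,n} = \overline{D}(1 + 5\cdot 2^{2n}, 2^{-(2n+3)})$ and $D_{b,n} = \overline{D}(1+7\cdot 2^{2n}, 2^{-(2n+3)})$. If $t \in \mathbb{Q}_2$ lies in $D_{a,n}$ or in $D_{b,n}$ for some $n \ge 3$, then $f_t$ is post-critically bounded. Equivalently, the forward orbit of $1$ under $f_t$ is bounded.
   Context: Let $|\cdot|$ denote the $2$-adic absolute value on $\mathbb{C}_2$, normalized by $|2| = 1/2$. The notation $\overline{D}(a,\delta)$ denotes the closed disk $\{z \in \mathbb{C}_2 : |z-a| \le \delta\}$. For $t \in \mathbb{C}_2$, let $f_t(z) = -\tfrac32 t(-2z^3+3z^2)+1$. Its critical points are $0$ and $1$, and $f_t(0)=1$. Post-critically bounded means that both critical points have bounded forward orbits. *)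

theory Defs
  imports "HOL-Computational_Algebra.Computational_Algebra"
begin

definition val2 :: "rat \<Rightarrow> int" where
  "val2 q = (let (a, b) = quotient_of q in
              int (multiplicity (2::int) a) - int (multiplicity (2::int) b))"

definition abs2 :: "rat \<Rightarrow> real" where
  "abs2 q = (if q = 0 then 0 else 2 powr (- real_of_int (val2 q)))"

(* Q_2 is realised as the completion of Q: an element of Q_2 is represented by
   a 2-adically Cauchy sequence of rationals (every element of Q_2 arises so). *)
definition cauchy2 :: "(nat \<Rightarrow> rat) \<Rightarrow> bool" where
  "cauchy2 X \<longleftrightarrow> (\<forall>e>0. \<exists>N. \<forall>m\<ge>N. \<forall>n\<ge>N. abs2 (X m - X n) < e)"

definition qnorm :: "(nat \<Rightarrow> rat) \<Rightarrow> real" where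
  "qnorm X = lim (\<lambda>n. abs2 (X n))"

definition fmap :: "rat \<Rightarrow> rat \<Rightarrow> rat" where
  "fmap t z = - (3/2) * t * (- 2 * z ^ 3 + 3 * z ^ 2) + 1"

(* k-th orbit point f_t^k(z0), as a Cauchy sequence (f_t is polynomial, hence
   2-adically continuous, so it may be applied termwise) *)
definition orbit_pt :: "(nat \<Rightarrow> rat) \<Rightarrow> rat \<Rightarrow> nat \<Rightarrow> nat \<Rightarrow> rat" where
  "orbit_pt T z0 k = (\<lambda>n. (fmap (T n) ^^ k) z0)"

definition bounded_orbit :: "(nat \<Rightarrow> rat) \<Rightarrow> rat \<Rightarrow> bool" where
  "bounded_orbit T z0 \<longleftrightarrow> (\<exists>M. \<forall>k. qnorm (orbit_pt T z0 k) \<le> M)"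

(* critical points of f_t are 0 and 1 *)
definition post_crit_bounded :: "(nat \<Rightarrow> rat) \<Rightarrow> bool" where
  "post_crit_bounded T \<longleftrightarrow> bounded_orbit T 0 \<and> bounded_orbit T 1"

end

theory Submission
  imports Defs
begin


definition Zl :: "rat \<Rightarrow> bool" where
  "Zl q \<longleftrightarrow> (\<exists>a b::int. odd b \<and> q = of_int a / of_int b)"

lemma Zl_int[simp]: "Zl (of_int a)"
  unfolding Zl_def by (rule exI[of _ a], rule exI[of _ 1]) simp

lemma Zl_nat[simp]: "Zl (of_nat a)"
  using Zl_int[of "int a"] by simp

lemma Zl_numeral[simp]: "Zl (numeral k)" "Zl 0" "Zl 1"
  using Zl_int[of "numeral k"] Zl_int[of 0] Zl_int[of 1] by simp_all

lemma Zl_add[intro]: assumes "Zl x" "Zl y" shows "Zl (x + y)"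
proof -
  obtain a b c d where ab: "odd b" "x = of_int a / of_int b" and cd: "odd d" "y = of_int c / of_int d"
    using assms unfolding Zl_def by blast
  have "b \<noteq> 0" "d \<noteq> 0" using ab cd by auto
  then have "x + y = of_int (a*d + c*b) / of_int (b*d)" using ab cd by (simp add: field_simps)
  moreover have "odd (b*d)" using ab cd by simp
  ultimately show ?thesis unfolding Zl_def by blast
qed

lemma Zl_mult[intro]: assumes "Zl x" "Zl y" shows "Zl (x * y)"
proof -
  obtain a b c d where ab: "odd b" "x = of_int a / of_int b" and cd: "odd d" "y = of_int c / of_int d"
    using assms unfolding Zl_def by blast
  have "x * y = of_int (a*c) / of_int (b*d)" using ab cd by simp
  moreover have "odd (b*d)" using ab cd by simp
  ultimately show ?thesis unfolding Zl_def by blast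
qed

lemma Zl_minus[intro]: assumes "Zl x" shows "Zl (- x)"
proof -
  obtain a b where ab: "odd b" "x = of_int a / of_int b" using assms unfolding Zl_def by blast
  have "- x = of_int (-a) / of_int b" using ab by simp
  then show ?thesis using ab unfolding Zl_def by blast
qed

lemma Zl_diff[intro]: "Zl x \<Longrightarrow> Zl y \<Longrightarrow> Zl (x - y)"
  using Zl_add[of x "-y"] Zl_minus[of y] by simp

lemma Zl_pow[intro]: "Zl x \<Longrightarrow> Zl (x ^ k)"
  by (induction k) auto

lemma Zl_split: assumes "Zl y" shows "Zl (y/2) \<or> Zl ((y-1)/2)"
proof -
  obtain a b where ab: "odd b" "y = of_int a / of_int b" using assms unfolding Zl_def by blast
  have b0: "b \<noteq> 0" using ab by auto
  show ?thesis
  proof (cases "even a")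
    case True
    then obtain c where "a = 2*c" by blast
    then have "y/2 = of_int c / of_int b" using ab by simp
    then show ?thesis using ab unfolding Zl_def by blast
  next
    case False
    then have "even (a - b)" using ab by simp
    then obtain c where c: "a - b = 2*c" by blast
    have "(y-1)/2 = (of_int (a-b)) / of_int (2*b)" using ab b0 by (simp add: field_simps)
    also have "\<dots> = of_int c / of_int b" using c b0 by simp
    finally show ?thesis using ab unfolding Zl_def by blast
  qed
qed

lemma val2_repr:
  assumes "odd a" "odd b"
  shows "val2 (of_int (2^i*a) / of_int (2^j*b)) = int i - int j"
proof -
  define q where "q = (of_int (2^i*a) / of_int (2^j*b) :: rat)"
  obtain p1 p2 where qo: "quotient_of q = (p1, p2)" by (cases "quotient_of q")
  have p2: "p2 > 0" using quotient_of_denom_pos[OF qo] .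
  have qe: "q = of_int p1 / of_int p2" using quotient_of_div[OF qo] .
  have a0: "a \<noteq> 0" "b \<noteq> 0" using assms by auto
  have "of_int p1 * of_int (2^j*b) = (of_int (2^i*a) * of_int p2 :: rat)"
    using qe p2 a0 unfolding q_def by (simp add: field_simps)
  then have eq: "p1 * (2^j*b) = 2^i*a*p2"
    by (metis of_int_eq_iff of_int_mult)
  then have p10: "p1 \<noteq> 0" using a0 p2 by auto
  have m2: "multiplicity (2::int) (2^k) = k" for k by (simp add: multiplicity_prime_power)
  have mo: "multiplicity (2::int) c = 0" if "odd c" for c
    using that by (simp add: not_dvd_imp_multiplicity_0)
  have pe: "prime_elem (2::int)" by simp
  have "multiplicity (2::int) (p1 * (2^j*b)) = multiplicity 2 p1 + j"
    using a0 p10 by (simp add: prime_elem_multiplicity_mult_distrib[OF pe] m2 mo assms)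
  moreover have "multiplicity (2::int) (2^i*a*p2) = i + multiplicity 2 p2"
    using a0 p2 by (simp add: prime_elem_multiplicity_mult_distrib[OF pe] m2 mo assms)
  ultimately have "multiplicity 2 p1 + j = i + multiplicity (2::int) p2" using eq by simp
  then show ?thesis unfolding val2_def q_def[symmetric] qo by simp
qed

lemma rat_decomp:
  fixes q :: rat
  assumes "q \<noteq> 0"
  shows "\<exists>i j a b. odd a \<and> odd b \<and> q = of_int (2^i*a) / of_int (2^j*b)"
proof -
  obtain p1 p2 where qo: "quotient_of q = (p1, p2)" by (cases "quotient_of q")
  have p2: "p2 > 0" using quotient_of_denom_pos[OF qo] .
  have qe: "q = of_int p1 / of_int p2" using quotient_of_div[OF qo] .
  have p10: "p1 \<noteq> 0" using qe assms by auto
  obtain a where a: "p1 = 2 ^ multiplicity 2 p1 * a" "\<not> 2 dvd a"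
    using multiplicity_decompose'[of p1 2] p10 by auto
  obtain b where b: "p2 = 2 ^ multiplicity 2 p2 * b" "\<not> 2 dvd b"
    using multiplicity_decompose'[of p2 2] p2 by auto
  show ?thesis using a b qe by (intro exI[of _ "multiplicity 2 p1"] exI[of _ "multiplicity 2 p2"] exI[of _ a] exI[of _ b]) auto
qed

lemma val2_Zl: "Zl q \<longleftrightarrow> q = 0 \<or> 0 \<le> val2 q"
proof
  assume "Zl q"
  then obtain c d where cd: "odd d" "q = of_int c / of_int d" unfolding Zl_def by blast
  show "q = 0 \<or> 0 \<le> val2 q"
  proof (cases "q = 0")
    case False
    then have "c \<noteq> 0" using cd by auto
    obtain a where a: "c = 2 ^ multiplicity 2 c * a" "\<not> 2 dvd a"
      using multiplicity_decompose'[of c 2] \<open>c \<noteq> 0\<close> by auto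
    have "q = of_int (2 ^ multiplicity 2 c * a) / of_int (2^0 * d)" using cd a by simp
    then have "val2 q = int (multiplicity 2 c) - int 0" using val2_repr[of a d "multiplicity 2 c" 0] a cd by simp
    then show ?thesis by simp
  qed simp
next
  assume h: "q = 0 \<or> 0 \<le> val2 q"
  show "Zl q"
  proof (cases "q = 0")
    case False
    then obtain i j a b where r: "odd a" "odd b" "q = of_int (2^i*a) / of_int (2^j*b)" using rat_decomp by blast
    then have "val2 q = int i - int j" using val2_repr by simp
    then have ji: "j \<le> i" using h False by simp
    have "(2::int)^i = 2^(i-j) * 2^j" using ji by (simp add: power_add[symmetric])
    then have "q = of_int (2^(i-j)*a) / of_int b" using r by (simp add: field_simps)
    then show ?thesis using r unfolding Zl_def by blast
  qed simp
qed

lemma val2_scale: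
  fixes q :: rat
  assumes "q \<noteq> 0"
  shows "val2 (q * 2 powi k) = val2 q + k"
proof -
  obtain i j a b where r: "odd a" "odd b" "q = of_int (2^i*a) / of_int (2^j*b)" using rat_decomp assms by blast
  have vq: "val2 q = int i - int j" using val2_repr r by simp
  show ?thesis
  proof (cases "k \<ge> 0")
    case True
    have "q * 2 powi k = q * 2 ^ nat k" using True by (simp add: power_int_def)
    also have "\<dots> = of_int (2^(i + nat k)*a) / of_int (2^j*b)" using r by (simp add: power_add)
    finally show ?thesis using val2_repr[OF r(1,2)] vq True by simp
  next
    case False
    have "q * 2 powi k = q / 2 ^ nat (-k)" using False by (simp add: power_int_def field_simps)
    also have "\<dots> = of_int (2^i*a) / of_int (2^(j + nat (-k))*b)" using r by (simp add: power_add)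
    finally show ?thesis using val2_repr[OF r(1,2)] vq False by simp
  qed
qed

definition Div2 :: "int \<Rightarrow> rat \<Rightarrow> bool" where
  "Div2 j q \<longleftrightarrow> Zl (q * 2 powi (-j))"

lemma Div2_iff: "Div2 j q \<longleftrightarrow> q = 0 \<or> j \<le> val2 q"
  unfolding Div2_def val2_Zl by (cases "q = 0") (auto simp: val2_scale)

lemma abs2_le_iff: "abs2 q \<le> 2 powr (- of_int j) \<longleftrightarrow> Div2 j q"
  unfolding Div2_iff abs2_def by auto

lemma Div2_0_iff: "Div2 0 q \<longleftrightarrow> Zl q"
  unfolding Div2_def by simp

lemma Div2_add: "Div2 j x \<Longrightarrow> Div2 j y \<Longrightarrow> Div2 j (x + y)"
  unfolding Div2_def by (simp add: distrib_right Zl_add)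

lemma Div2_diff: "Div2 j x \<Longrightarrow> Div2 j y \<Longrightarrow> Div2 j (x - y)"
  unfolding Div2_def by (simp add: left_diff_distrib Zl_diff)

lemma Div2_mult: "Div2 i x \<Longrightarrow> Div2 k y \<Longrightarrow> Div2 (i + k) (x * y)"
proof -
  assume "Div2 i x" "Div2 k y"
  then have "Zl ((x * 2 powi (-i)) * (y * 2 powi (-k)))" unfolding Div2_def by blast
  moreover have "(x * 2 powi (-i)) * (y * 2 powi (-k)) = x * y * 2 powi (-(i+k))"
  proof -
    have "(2::rat) powi (-i) * 2 powi (-k) = 2 powi (-i + (-k))" by (rule power_int_add[symmetric]) simp
    then show ?thesis by (simp add: algebra_simps)
  qed
  ultimately show ?thesis unfolding Div2_def by simp
qed

lemma Div2_mono: "Div2 j x \<Longrightarrow> i \<le> j \<Longrightarrow> Div2 i x"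
  unfolding Div2_iff by auto



definition inS :: "rat \<Rightarrow> bool" where
  "inS z \<longleftrightarrow> Zl ((z-2)/4) \<or> Zl ((z-3)/4) \<or> Zl ((2*z-19)/32) \<or> Zl ((2*z-27)/32)"

lemmas Zl_I = Zl_add Zl_mult Zl_pow Zl_numeral

lemma inS_step:
  assumes s: "Zl s" and t: "t = 1 + 32*s" and zS: "inS z"
  shows "inS (fmap t z)"
proof -
  consider (c1) "Zl ((z-2)/4)" | (c2) "Zl ((z-3)/4)" | (c3) "Zl ((2*z-19)/32)" | (c4) "Zl ((2*z-27)/32)"
    using zS unfolding inS_def by blast
  then show ?thesis
  proof cases
    case c1
    define y where "y = (z-2)/4"
    have z: "z = 2 + 4*y" unfolding y_def by (simp add: field_simps)
    have y: "Zl y" unfolding y_def by (rule c1)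
    have "fmap t z - 3 = 4*(1 + 48*s + 576*s*y + 1728*s*y^2 + 1536*s*y^3 + 18*y + 54*y^2 + 48*y^3)"
      unfolding fmap_def t z by (simp add: field_simps) algebra
    then have eq: "(fmap t z - 3)/4 = 1 + 48*s + 576*s*y + 1728*s*y^2 + 1536*s*y^3 + 18*y + 54*y^2 + 48*y^3" by simp
    have zl: "Zl (1 + 48*s + 576*s*y + 1728*s*y^2 + 1536*s*y^3 + 18*y + 54*y^2 + 48*y^3)"
      using s y by (intro Zl_I)
    have "Zl ((fmap t z - 3)/4)" unfolding eq by (rule zl)
    then show ?thesis unfolding inS_def by blast
  next
    case c2
    define y where "y = (z-3)/4"
    have z: "z = 3 + 4*y" unfolding y_def by (simp add: field_simps)
    have y: "Zl y" unfolding y_def by (rule c2)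
    from Zl_split[OF y] consider (e) "Zl (y/2)" | (o) "Zl ((y-1)/2)" by blast
    then show ?thesis
    proof cases
      case e
      define w where "w = y/2"
      have z: "z = 3 + 4*(2*w)" unfolding w_def z by (simp add: field_simps)
      have w: "Zl w" unfolding w_def by (rule e)
      have "2*fmap t z - 19 = 32*(2 + 81*s + 864*s*w + 2880*s*w^2 + 3072*s*w^3 + 27*w + 90*w^2 + 96*w^3)"
        unfolding fmap_def t z by (simp add: field_simps) algebra
      then have eq: "(2*fmap t z - 19)/32 = 2 + 81*s + 864*s*w + 2880*s*w^2 + 3072*s*w^3 + 27*w + 90*w^2 + 96*w^3" by simp
      have zl: "Zl (2 + 81*s + 864*s*w + 2880*s*w^2 + 3072*s*w^3 + 27*w + 90*w^2 + 96*w^3)"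
        using s w by (intro Zl_I)
      have "Zl ((2*fmap t z - 19)/32)" unfolding eq by (rule zl)
      then show ?thesis unfolding inS_def by blast
    next
      case o
      define w where "w = (y-1)/2"
      have z: "z = 3 + 4*(1+2*w)" unfolding w_def z by (simp add: field_simps)
      have w: "Zl w" unfolding w_def by (rule o)
      have "2*fmap t z - 19 = 32*(50 + 1617*s + 6048*s*w + 7488*s*w^2 + 3072*s*w^3 + 189*w + 234*w^2 + 96*w^3)"
        unfolding fmap_def t z by (simp add: field_simps) algebra
      then have eq: "(2*fmap t z - 19)/32 = 50 + 1617*s + 6048*s*w + 7488*s*w^2 + 3072*s*w^3 + 189*w + 234*w^2 + 96*w^3" by simp
      have zl: "Zl (50 + 1617*s + 6048*s*w + 7488*s*w^2 + 3072*s*w^3 + 189*w + 234*w^2 + 96*w^3)"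
        using s w by (intro Zl_I)
      have "Zl ((2*fmap t z - 19)/32)" unfolding eq by (rule zl)
      then show ?thesis unfolding inS_def by blast
    qed
  next
    case c3
    define y where "y = (2*z-19)/32"
    have z: "z = (19 + 32*y)/2" unfolding y_def by (simp add: field_simps)
    have y: "Zl y" unfolding y_def by (rule c3)
    have "fmap t z - 3 = 4*(541 + 17328*s + 93024*s*y + 165888*s*y^2 + 98304*s*y^3 + 2907*y + 5184*y^2 + 3072*y^3)"
      unfolding fmap_def t z by (simp add: field_simps) algebra
    then have eq: "(fmap t z - 3)/4 = 541 + 17328*s + 93024*s*y + 165888*s*y^2 + 98304*s*y^3 + 2907*y + 5184*y^2 + 3072*y^3" by simp
    have zl: "Zl (541 + 17328*s + 93024*s*y + 165888*s*y^2 + 98304*s*y^3 + 2907*y + 5184*y^2 + 3072*y^3)"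
      using s y by (intro Zl_I)
    have "Zl ((fmap t z - 3)/4)" unfolding eq by (rule zl)
    then show ?thesis unfolding inS_def by blast
  next
    case c4
    define y where "y = (2*z-27)/32"
    have z: "z = (27 + 32*y)/2" unfolding y_def by (simp add: field_simps)
    have y: "Zl y" unfolding y_def by (rule c4)
    have "fmap t z - 2 = 4*(1640 + 52488*s + 194400*s*y + 239616*s*y^2 + 98304*s*y^3 + 6075*y + 7488*y^2 + 3072*y^3)"
      unfolding fmap_def t z by (simp add: field_simps) algebra
    then have eq: "(fmap t z - 2)/4 = 1640 + 52488*s + 194400*s*y + 239616*s*y^2 + 98304*s*y^3 + 6075*y + 7488*y^2 + 3072*y^3" by simp
    have zl: "Zl (1640 + 52488*s + 194400*s*y + 239616*s*y^2 + 98304*s*y^3 + 6075*y + 7488*y^2 + 3072*y^3)"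
      using s y by (intro Zl_I)
    have "Zl ((fmap t z - 2)/4)" unfolding eq by (rule zl)
    then show ?thesis unfolding inS_def by blast
  qed
qed

definition R :: "rat \<Rightarrow> bool" where
  "R e \<longleftrightarrow> Zl ((e-5)/8) \<or> Zl ((e-7)/8)"

lemma R_step: assumes "R e" "Zl X" shows "R (3*e + 8*X)"
proof -
  consider (a) "Zl ((e-5)/8)" | (b) "Zl ((e-7)/8)" using assms(1) unfolding R_def by blast
  then show ?thesis
  proof cases
    case a
    define x where "x = (e-5)/8"
    have x: "Zl x" unfolding x_def by (rule a)
    have eq: "(3*e + 8*X - 7)/8 = 1 + 3*x + X" unfolding x_def by (simp add: field_simps)
    have "Zl ((3*e + 8*X - 7)/8)" unfolding eq using x assms(2) by (intro Zl_I)
    then show ?thesis unfolding R_def by blast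
  next
    case b
    define x where "x = (e-7)/8"
    have x: "Zl x" unfolding x_def by (rule b)
    have eq: "(3*e + 8*X - 5)/8 = 2 + 3*x + X" unfolding x_def by (simp add: field_simps)
    have "Zl ((3*e + 8*X - 5)/8)" unfolding eq using x assms(2) by (intro Zl_I)
    then show ?thesis unfolding R_def by blast
  qed
qed

lemma R_Zl: "R e \<Longrightarrow> Zl e"
proof -
  assume "R e"
  then consider "Zl ((e-5)/8)" | "Zl ((e-7)/8)" unfolding R_def by blast
  then show "Zl e"
  proof cases
    case 1
    have eq: "5 + 8*((e-5)/8) = e" by (simp add: field_simps)
    have "Zl (5 + 8*((e-5)/8))" using 1 by (intro Zl_I)
    then show ?thesis unfolding eq .
  next
    case 2
    have eq: "7 + 8*((e-7)/8) = e" by (simp add: field_simps)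
    have "Zl (7 + 8*((e-7)/8))" using 2 by (intro Zl_I)
    then show ?thesis unfolding eq .
  qed
qed

lemma trans_id:
  "fmap (1 + Q*P*a) (-1/2 + 2*P*e) = -1/2 + (P/2)*(-3*Q*a + 27*(1+Q*P*a)*e
     - 72*(1+Q*P*a)*P*e^2 + 48*(1+Q*P*a)*P^2*e^3)"
  unfolding fmap_def by (simp add: field_simps) algebra

lemma transient:
  fixes a t :: rat and n :: nat
  assumes n: "n \<ge> 2" and a: "Zl a" "R a" and t: "t = 1 + 4^n * a"
  shows "1 \<le> k \<Longrightarrow> k \<le> n \<Longrightarrow> \<exists>e. Zl e \<and> (fmap t ^^ k) 1 = -1/2 + 2*4^(n-k)*e
            \<and> (k = 1 \<longrightarrow> e = -3*a) \<and> (k \<ge> 2 \<longrightarrow> R e)"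
proof (induction k)
  case 0
  then show ?case by simp
next
  case (Suc k)
  show ?case
  proof (cases "k = 0")
    case True
    have "(4::rat)^n = 4 * 4^(n-1)" using n by (metis Suc_diff_1 less_le_trans pos2 power_Suc zero_less_numeral)
    then have "(fmap t ^^ Suc k) 1 = -1/2 + 2*4^(n - Suc k)*(-3*a)"
      using True unfolding t fmap_def by (simp add: field_simps)
    then show ?thesis using True a by (intro exI[of _ "-3*a"]) (auto intro!: Zl_minus Zl_mult)
  next
    case False
    then have k1: "1 \<le> k" "k \<le> n" using Suc.prems by auto
    obtain e where e: "Zl e" "(fmap t ^^ k) 1 = -1/2 + 2*4^(n-k)*e" "k = 1 \<longrightarrow> e = -3*a" "k \<ge> 2 \<longrightarrow> R e"
      using Suc.IH k1 by blast
    define P :: rat where "P = 4^(n - Suc k)"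
    define Q :: rat where "Q = 4^k"
    have nk: "n - k = Suc (n - Suc k)" using Suc.prems by simp
    have P4: "(4::rat)^(n-k) = 4*P" unfolding P_def nk by simp
    have nQ: "(4::rat)^n = Q * (4*P)"
    proof -
      have "n = k + (n-k)" using k1 by simp
      then have "(4::rat)^n = 4^k * 4^(n-k)" by (metis power_add)
      then show ?thesis unfolding Q_def P4 by simp
    qed
    have tQ: "t = 1 + Q*(4*P)*a" unfolding t nQ by simp
    define e' where "e' = -3*Q*a + 27*(1+Q*(4*P)*a)*e - 72*(1+Q*(4*P)*a)*(4*P)*e^2 + 48*(1+Q*(4*P)*a)*(4*P)^2*e^3"
    have step: "(fmap t ^^ Suc k) 1 = -1/2 + 2*4^(n - Suc k)*e'"
    proof -
      have "(fmap t ^^ Suc k) 1 = fmap t ((fmap t ^^ k) 1)" by simp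
      also have "\<dots> = fmap (1 + Q*(4*P)*a) (-1/2 + 2*(4*P)*e)" unfolding e(2) P4 by (simp only: tQ)
      also have "\<dots> = -1/2 + ((4*P)/2) * e'" unfolding trans_id e'_def ..
      finally show ?thesis unfolding P_def by simp
    qed
    have PZ: "Zl P" unfolding P_def by (metis Zl_numeral(1) Zl_pow)
    have QZ: "Zl Q" unfolding Q_def by (metis Zl_numeral(1) Zl_pow)
    have e'Z: "Zl e'" unfolding e'_def using a(1) e(1) PZ QZ by (intro Zl_I Zl_diff Zl_minus)
    have Re': "R e'"
    proof (cases "k = 1")
      case True
      then have ea: "e = -3*a" and Q4: "Q = 4" using e(3) unfolding Q_def by auto
      define Y where "Y = -12*a - 162*P*a^2 - 324*(1+16*P*a)*P*a^2 - 2592*(1+16*P*a)*P^2*a^3"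
      have "e' = 3*a + 8*Y" unfolding e'_def Y_def ea Q4 by algebra
      moreover have "Zl Y" unfolding Y_def using a(1) PZ by (intro Zl_I Zl_diff Zl_minus)
      ultimately show ?thesis using R_step[OF a(2)] by simp
    next
      case False
      then have k2: "k \<ge> 2" using k1 by simp
      define Q1 :: rat where "Q1 = 4^(k-2)"
      have Q16: "Q = 16*Q1"
      proof -
        have "k = (k-2) + 2" using k2 by simp
        then have "(4::rat)^k = 4^(k-2) * 4^2" by (metis power_add)
        then show ?thesis unfolding Q_def Q1_def by simp
      qed
      have Q1Z: "Zl Q1" unfolding Q1_def by (metis Zl_numeral(1) Zl_pow)
      define X where "X = -6*Q1*a + 3*e + 54*Q1*(4*P)*a*e - 9*(1+Q*(4*P)*a)*(4*P)*e^2 + 6*(1+Q*(4*P)*a)*(4*P)^2*e^3"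
      have "e' = 3*e + 8*X" unfolding e'_def X_def Q16 by algebra
      moreover have "Zl X" unfolding X_def using a(1) e(1) PZ QZ Q1Z by (intro Zl_I Zl_diff Zl_minus)
      ultimately show ?thesis using R_step e(4) k2 by simp
    qed
    show ?thesis using step e'Z Re' k1 by (intro exI[of _ e']) auto
  qed
qed

lemma inS_Zl2: assumes "inS z" shows "Zl (2*z)"
proof -
  consider (c1) "Zl ((z-2)/4)" | (c2) "Zl ((z-3)/4)" | (c3) "Zl ((2*z-19)/32)" | (c4) "Zl ((2*z-27)/32)"
    using assms unfolding inS_def by blast
  then show ?thesis
  proof cases
    case c1
    have eq: "4 + 8*((z-2)/4) = 2*z" by (simp add: field_simps)
    have "Zl (4 + 8*((z-2)/4))" using c1 by (intro Zl_I)
    then show ?thesis unfolding eq .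
  next
    case c2
    have eq: "6 + 8*((z-3)/4) = 2*z" by (simp add: field_simps)
    have "Zl (6 + 8*((z-3)/4))" using c2 by (intro Zl_I)
    then show ?thesis unfolding eq .
  next
    case c3
    have eq: "19 + 32*((2*z-19)/32) = 2*z" by (simp add: field_simps)
    have "Zl (19 + 32*((2*z-19)/32))" using c3 by (intro Zl_I)
    then show ?thesis unfolding eq .
  next
    case c4
    have eq: "27 + 32*((2*z-27)/32) = 2*z" by (simp add: field_simps)
    have "Zl (27 + 32*((2*z-27)/32))" using c4 by (intro Zl_I)
    then show ?thesis unfolding eq .
  qed
qed

lemma R_inS: assumes "R e" shows "inS (-1/2 + 2*e)"
proof -
  consider (a) "Zl ((e-5)/8)" | (b) "Zl ((e-7)/8)" using assms unfolding R_def by blast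
  then show ?thesis
  proof cases
    case a
    have eq: "(2*(-1/2 + 2*e) - 19)/32 = (e-5)/8" by (simp add: field_simps)
    have "Zl ((2*(-1/2 + 2*e) - 19)/32)" unfolding eq by (rule a)
    then show ?thesis unfolding inS_def by blast
  next
    case b
    have eq: "(2*(-1/2 + 2*e) - 27)/32 = (e-7)/8" by (simp add: field_simps)
    have "Zl ((2*(-1/2 + 2*e) - 27)/32)" unfolding eq by (rule b)
    then show ?thesis unfolding inS_def by blast
  qed
qed

lemma core_orbit:
  fixes t r :: rat and n :: nat and c :: int
  assumes n: "n \<ge> 3" and r: "Zl r" and c: "c = 5 \<or> c = 7" and t: "t = 1 + 4^n * (of_int c + 8*r)"
  shows "Zl (2 * (fmap t ^^ k) 1)"
proof -
  define a where "a = of_int c + 8*r"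
  have aZ: "Zl a" unfolding a_def using r by (intro Zl_I) simp
  have aR: "R a"
  proof -
    have "(a - of_int c)/8 = r" unfolding a_def by simp
    then show ?thesis using c r unfolding R_def by auto
  qed
  have t': "t = 1 + 4^n * a" unfolding t a_def ..
  note tr = transient[OF _ aZ aR t']
  define s where "s = 2*4^(n-3)*a"
  have sZ: "Zl s" unfolding s_def using aZ by (intro Zl_I)
  have ts: "t = 1 + 32*s"
  proof -
    have "n = (n-3) + 3" using n by simp
    then have "(4::rat)^n = 4^(n-3) * 4^3" by (metis power_add)
    then show ?thesis unfolding t' s_def by simp
  qed
  have inSk: "inS ((fmap t ^^ (n + j)) 1)" for j
  proof (induction j)
    case 0
    obtain e where e: "(fmap t ^^ n) 1 = -1/2 + 2*4^(n-n)*e" "n \<ge> 2 \<longrightarrow> R e"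
      using tr[of n] n by auto
    then show ?case using R_inS n by simp
  next
    case (Suc j)
    then show ?case using inS_step[OF sZ ts] by simp
  qed
  show ?thesis
  proof (cases "k \<le> n")
    case True
    show ?thesis
    proof (cases "k = 0")
      case True
      then show ?thesis by simp
    next
      case False
      then obtain e where e: "Zl e" "(fmap t ^^ k) 1 = -1/2 + 2*4^(n-k)*e"
        using tr[of k] n \<open>k \<le> n\<close> by auto
      have eq: "2 * (fmap t ^^ k) 1 = -1 + 4*4^(n-k)*e" unfolding e(2) by (simp add: field_simps)
      show ?thesis unfolding eq using e(1) by (intro Zl_I Zl_minus) auto
    qed
  next
    case False
    then have "k = n + (k - n)" by simp
    then have "inS ((fmap t ^^ k) 1)" using inSk[of "k-n"] by metis
    then show ?thesis by (rule inS_Zl2)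
  qed
qed



lemma Div2_zero[simp]: "Div2 j 0" unfolding Div2_iff by simp

lemma abs2_nonneg: "abs2 q \<ge> 0" unfolding abs2_def by simp

lemma Div2_m1: "Div2 (-1) z \<longleftrightarrow> Zl (2*z)"
  unfolding Div2_def by (simp add: mult.commute)

lemma lipschitz:
  assumes z: "Zl (2*z)" and w: "Zl (2*w)" and s: "Zl s"
    and ts: "Div2 (j+3) (t - s)" and zw: "Div2 (j+3) (z - w)"
  shows "Div2 j (fmap t z - fmap s w)"
proof -
  define Z where "Z = 2*z"
  define W where "W = 2*w"
  have eq: "fmap t z - fmap s w = (-(3/8)) * ((t-s)*(Z^2*(3-Z)) + s*((Z-W)*(3*(Z+W) - (Z^2+Z*W+W^2))))"
    unfolding fmap_def Z_def W_def by (simp add: field_simps) algebra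
  have ZZ: "Zl Z" "Zl W" using z w unfolding Z_def W_def by auto
  have c: "Div2 (-3) (-(3/8))" proof -
    have "-(3/8) * (2::rat) powi (- (-3)) = - 3" by simp
    moreover have "Zl (- 3)" by (rule Zl_minus) simp
    ultimately show ?thesis unfolding Div2_def by simp
  qed
  have d1: "Div2 (j+3) ((t-s)*(Z^2*(3-Z)))"
    using Div2_mult[OF ts, of 0 "Z^2*(3-Z)"] ZZ by (simp add: Div2_0_iff Zl_I Zl_diff)
  have zw2: "Div2 (j+3) (Z - W)"
  proof -
    have "Z - W = 2*(z-w)" unfolding Z_def W_def by simp
    moreover have "Div2 1 (2::rat)" unfolding Div2_def by simp
    ultimately have "Div2 (1 + (j+3)) (Z - W)" using Div2_mult[OF _ zw] by metis
    then show ?thesis by (rule Div2_mono) simp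
  qed
  have d2: "Div2 (j+3) (s*((Z-W)*(3*(Z+W) - (Z^2+Z*W+W^2))))"
  proof -
    have "Zl (3*(Z+W) - (Z^2+Z*W+W^2))" using ZZ by (intro Zl_I Zl_diff)
    then have h: "Div2 0 (3*(Z+W) - (Z^2+Z*W+W^2))" by (simp only: Div2_0_iff)
    have "Div2 (j+3+0) ((Z-W)*(3*(Z+W) - (Z^2+Z*W+W^2)))"
      by (rule Div2_mult[OF zw2 h])
    then have "Div2 (0 + (j+3+0)) (s*((Z-W)*(3*(Z+W) - (Z^2+Z*W+W^2))))"
      using Div2_mult s by (metis Div2_0_iff)
    then show ?thesis by simp
  qed
  have "Div2 (-3 + (j+3)) (fmap t z - fmap s w)"
    unfolding eq by (rule Div2_mult[OF c Div2_add[OF d1 d2]])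
  then show ?thesis by simp
qed

lemma cauchy2_Div2:
  assumes "cauchy2 X"
  shows "\<exists>N. \<forall>m\<ge>N. \<forall>m'\<ge>N. Div2 j (X m - X m')"
proof -
  have "(2::real) powr (- of_int j) > 0" by simp
  then obtain N where N: "\<forall>m\<ge>N. \<forall>m'\<ge>N. abs2 (X m - X m') < 2 powr (- of_int j)"
    using assms unfolding cauchy2_def by blast
  show ?thesis using N abs2_le_iff less_imp_le by blast
qed

lemma abs2_isosceles:
  assumes "Div2 j (x - y)"
  shows "\<bar>abs2 x - abs2 y\<bar> \<le> 2 powr (- of_int j)"
proof (cases "Div2 j x")
  case True
  have "y = x - (x - y)" by simp
  then have "Div2 j y" using Div2_diff[OF True assms] by metis
  then have "abs2 x \<le> 2 powr (- of_int j)" "abs2 y \<le> 2 powr (- of_int j)" using True abs2_le_iff by auto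
  then show ?thesis using abs2_nonneg[of x] abs2_nonneg[of y] by linarith
next
  case False
  have ny: "\<not> Div2 j y"
  proof
    assume "Div2 j y"
    then have "Div2 j (y + (x - y))" using Div2_add assms by blast
    then show False using False by simp
  qed
  have x0: "x \<noteq> 0" "y \<noteq> 0" using False ny by auto
  have vx: "val2 x < j" "val2 y < j" using False ny x0 unfolding Div2_iff by auto
  have "Div2 (val2 x) x" unfolding Div2_iff by simp
  moreover have "Div2 (val2 x) (x - y)" using Div2_mono[OF assms] vx by simp
  ultimately have "Div2 (val2 x) (x - (x - y))" using Div2_diff by blast
  then have "val2 x \<le> val2 y" using x0 unfolding Div2_iff by simp
  have "Div2 (val2 y) y" unfolding Div2_iff by simp
  moreover have "Div2 (val2 y) (x - y)" using Div2_mono[OF assms] vx by simp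
  ultimately have "Div2 (val2 y) (y + (x - y))" using Div2_add by blast
  then have "val2 y \<le> val2 x" using x0 unfolding Div2_iff by simp
  then have "abs2 x = abs2 y" using \<open>val2 x \<le> val2 y\<close> x0 unfolding abs2_def by simp
  then show ?thesis by simp
qed

lemma Div2Cauchy_conv:
  assumes "\<And>j. \<exists>N. \<forall>m\<ge>N. \<forall>m'\<ge>N. Div2 j (X m - X m')"
  shows "(\<lambda>m. abs2 (X m)) \<longlonglongrightarrow> qnorm X"
proof -
  have "Cauchy (\<lambda>m. abs2 (X m))"
  proof (rule CauchyI)
    fix e :: real assume e: "0 < e"
    obtain k :: nat where k: "(1/2::real)^k < e" using real_arch_pow_inv[OF e] by force
    obtain N where N: "\<forall>m\<ge>N. \<forall>m'\<ge>N. Div2 (int k) (X m - X m')" using assms by blast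
    have "(2::real) powr (- of_int (int k)) = (1/2)^k"
      by (simp add: powr_minus powr_realpow inverse_eq_divide power_one_over)
    then have "\<forall>m\<ge>N. \<forall>m'\<ge>N. norm (abs2 (X m) - abs2 (X m')) < e"
      using N abs2_isosceles k by fastforce
    then show "\<exists>M. \<forall>m\<ge>M. \<forall>n\<ge>M. norm (abs2 (X m) - abs2 (X n)) < e" by blast
  qed
  then have "convergent (\<lambda>m. abs2 (X m))" by (rule Cauchy_convergent)
  then show ?thesis unfolding qnorm_def convergent_LIMSEQ_iff .
qed

lemma abs2_discrete:
  assumes "abs2 q < 2 powr (1 - of_int j)"
  shows "Div2 j q"
proof (cases "q = 0")
  case False
  then have "2 powr (- real_of_int (val2 q)) < 2 powr (1 - of_int j)" using assms unfolding abs2_def by simp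
  then have "- real_of_int (val2 q) < 1 - of_int j" by simp
  then have "j \<le> val2 q" by linarith
  then show ?thesis unfolding Div2_iff by simp
qed simp

lemma qnorm_small:
  assumes "\<And>j. \<exists>N. \<forall>m\<ge>N. \<forall>m'\<ge>N. Div2 j (X m - X m')"
    and "qnorm X \<le> 2 powr (- of_int j)"
  shows "\<exists>N. \<forall>m\<ge>N. Div2 j (X m)"
proof -
  have lim: "(\<lambda>m. abs2 (X m)) \<longlonglongrightarrow> qnorm X" using Div2Cauchy_conv assms(1) by blast
  have "qnorm X < 2 powr (1 - of_int j)"
  proof -
    have "(2::real) powr (- of_int j) < 2 powr (1 - of_int j)" by simp
    then show ?thesis using assms(2) by linarith
  qed
  from order_tendstoD(2)[OF lim this] have "eventually (\<lambda>m. abs2 (X m) < 2 powr (1 - of_int j)) sequentially" .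
  then obtain N where "\<forall>m\<ge>N. abs2 (X m) < 2 powr (1 - of_int j)" unfolding eventually_sequentially by blast
  then show ?thesis using abs2_discrete by blast
qed



lemma fmap0: "fmap t 0 = 1" unfolding fmap_def by simp

theorem mainTheorem5:
  fixes T :: "nat \<Rightarrow> rat" and n :: nat
  assumes "cauchy2 T" and "n \<ge> 3"
    and "qnorm (\<lambda>m. T m - (1 + 5 * 2 ^ (2 * n))) \<le> 2 powr (- real (2 * n + 3))
       \<or> qnorm (\<lambda>m. T m - (1 + 7 * 2 ^ (2 * n))) \<le> 2 powr (- real (2 * n + 3))"
  shows "post_crit_bounded T"
proof -
  obtain c :: int where c: "c = 5 \<or> c = 7"
    and h: "qnorm (\<lambda>m. T m - (1 + of_int c * 2 ^ (2 * n))) \<le> 2 powr (- real (2 * n + 3))"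
  proof -
    from assms(3) show ?thesis
    proof
      assume "qnorm (\<lambda>m. T m - (1 + 5 * 2 ^ (2 * n))) \<le> 2 powr (- real (2 * n + 3))"
      then show ?thesis using that[of 5] by simp
    next
      assume "qnorm (\<lambda>m. T m - (1 + 7 * 2 ^ (2 * n))) \<le> 2 powr (- real (2 * n + 3))"
      then show ?thesis using that[of 7] by simp
    qed
  qed
  define t0 :: rat where "t0 = 1 + of_int c * 2 ^ (2 * n)"
  have TC: "\<exists>N. \<forall>m\<ge>N. \<forall>m'\<ge>N. Div2 j (T m - T m')" for j
    using cauchy2_Div2[OF assms(1)] by blast
  have XC: "\<exists>N. \<forall>m\<ge>N. \<forall>m'\<ge>N. Div2 j ((T m - t0) - (T m' - t0))" for j
    using TC[of j] by simp
  have h': "qnorm (\<lambda>m. T m - t0) \<le> 2 powr (- of_int (int (2*n+3)))"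
    using h unfolding t0_def by simp
  obtain N0 where N0: "\<forall>m\<ge>N0. Div2 (int (2*n+3)) (T m - t0)"
    using qnorm_small[OF XC h'] by blast
  have p2: "(2::rat)^(2*n+3) = 4^n * 8" by (simp add: power_add power_mult)
  have good: "Zl (T m) \<and> (\<forall>k. Zl (2 * (fmap (T m) ^^ k) 1))" if m: "m \<ge> N0" for m
  proof -
    define r where "r = (T m - t0) * 2 powi (- int (2*n+3))"
    have rZ: "Zl r" using N0 m unfolding r_def Div2_def by blast
    have pi: "(2::rat) powi (- int (2*n+3)) = 1 / 2^(2*n+3)"
      by (simp only: power_int_minus_divide power_int_of_nat)
    have "r * 2^(2*n+3) = T m - t0"
      unfolding r_def pi by simp
    then have "T m = t0 + r * 2^(2*n+3)" by simp
    also have "\<dots> = 1 + 4^n * (of_int c + 8*r)"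
    proof -
      have p4: "(2::rat)^(2*n) = 4^n" by (simp add: power_mult)
      show ?thesis unfolding t0_def p2 p4 by (simp add: field_simps)
    qed
    finally have Tm: "T m = 1 + 4^n * (of_int c + 8*r)" .
    have "Zl (T m)" unfolding Tm using rZ by (intro Zl_I) simp_all
    moreover have "\<forall>k. Zl (2 * (fmap (T m) ^^ k) 1)"
      using core_orbit[OF assms(2) rZ c Tm] by blast
    ultimately show ?thesis by blast
  qed
  have ZC: "\<exists>N. \<forall>m\<ge>N. \<forall>m'\<ge>N. Div2 j ((fmap (T m) ^^ k) 1 - (fmap (T m') ^^ k) 1)" for k j
  proof (induction k arbitrary: j)
    case 0
    then show ?case by simp
  next
    case (Suc k)
    obtain N1 where N1: "\<forall>m\<ge>N1. \<forall>m'\<ge>N1. Div2 (j+3) ((fmap (T m) ^^ k) 1 - (fmap (T m') ^^ k) 1)"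
      using Suc.IH by blast
    obtain N2 where N2: "\<forall>m\<ge>N2. \<forall>m'\<ge>N2. Div2 (j+3) (T m - T m')" using TC by blast
    have "\<forall>m\<ge>max N0 (max N1 N2). \<forall>m'\<ge>max N0 (max N1 N2).
        Div2 j ((fmap (T m) ^^ Suc k) 1 - (fmap (T m') ^^ Suc k) 1)"
    proof (intro allI impI)
      fix m m' assume mm: "m \<ge> max N0 (max N1 N2)" "m' \<ge> max N0 (max N1 N2)"
      have gm: "Zl (T m) \<and> (\<forall>k. Zl (2 * (fmap (T m) ^^ k) 1))" using good mm by simp
      have gm': "Zl (T m') \<and> (\<forall>k. Zl (2 * (fmap (T m') ^^ k) 1))" using good mm by simp
      have "Div2 j (fmap (T m) ((fmap (T m) ^^ k) 1) - fmap (T m') ((fmap (T m') ^^ k) 1))"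
        using lipschitz[of "(fmap (T m) ^^ k) 1" "(fmap (T m') ^^ k) 1" "T m'" j "T m"] gm gm' N1 N2 mm by simp
      then show "Div2 j ((fmap (T m) ^^ Suc k) 1 - (fmap (T m') ^^ Suc k) 1)" by simp
    qed
    then show ?case by blast
  qed
  have b1: "qnorm (orbit_pt T 1 k) \<le> 2" for k
  proof -
    have lim: "(\<lambda>m. abs2 (orbit_pt T 1 k m)) \<longlonglongrightarrow> qnorm (orbit_pt T 1 k)"
      by (rule Div2Cauchy_conv) (use ZC in \<open>simp add: orbit_pt_def\<close>)
    have "\<forall>m\<ge>N0. abs2 (orbit_pt T 1 k m) \<le> 2"
    proof (intro allI impI)
      fix m assume "m \<ge> N0"
      then have "Zl (2 * (fmap (T m) ^^ k) 1)" using good by blast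
      then have "Div2 (-1) (orbit_pt T 1 k m)" unfolding orbit_pt_def Div2_m1 .
      then have "abs2 (orbit_pt T 1 k m) \<le> 2 powr (- of_int (-1))" using abs2_le_iff by blast
      then show "abs2 (orbit_pt T 1 k m) \<le> 2" by simp
    qed
    then show ?thesis using LIMSEQ_le_const2[OF lim] by blast
  qed
  have b0: "qnorm (orbit_pt T 0 k) \<le> 2" for k
  proof (cases k)
    case 0
    have "orbit_pt T 0 k = (\<lambda>m. 0)" unfolding orbit_pt_def 0 by simp
    then have "qnorm (orbit_pt T 0 k) = lim (\<lambda>m. 0::real)" unfolding qnorm_def abs2_def by simp
    also have "\<dots> = 0" by (rule limI) simp
    finally show ?thesis by simp
  next
    case (Suc k')
    have "orbit_pt T 0 k = orbit_pt T 1 k'"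
      unfolding orbit_pt_def Suc by (simp only: funpow_Suc_right comp_def fmap0)
    then show ?thesis using b1 by simp
  qed
  show ?thesis unfolding post_crit_bounded_def bounded_orbit_def using b0 b1 by blast
qed

end
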